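(* Let $X$ be a complete CAT(0)-space. Then every isometry $T$ of $X$ fixes a point of the metric compactification $\overline{X}$, i.e. there is $h\in\overline{X}$ with $Th=h$. If moreover $X$ is proper, every isometry of $X$ fixes a point of the visual compactification of $X$.
   Context: Fix a base point $x_0\in X$. Let $\mathrm{Hom}(X,\mathbb{R})$ be the set of $1$-Lipschitz functions $X\to\mathbb{R}$ with the topology of pointwise convergence, and for $y\in X$ let $h_y(\cdot)=d(\cdot,y)-d(x_0,y)$. The metric compactification $\overline{X}$ is the closure of $\{h_y:y\in X\}$ in $\mathrm{Hom}(X,\mathbb{R})$; its elements are metric functionals. An isometry (surjective distance-preserving map) $T$ acts on $\overline{X}$ by $(Th)(x)=h(T^{-1}x)-h(T^{-1}x_0)$. A metric space is proper if closed bounded sets are compact. The visual compactification of a proper CAT(0)-space is $X\cup\partial X$, where $\partial X$ is the set of equivalence classes of geodesic rays (two rays equivalent if at bounded distance), with the cone topology; isometries act on it naturally. *)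

theory Defs
  imports "HOL-Analysis.Analysis"
begin

definition geodesic_segment :: "'a::metric_space set \<Rightarrow> 'a \<Rightarrow> 'a \<Rightarrow> (real \<Rightarrow> 'a) \<Rightarrow> bool" where
  "geodesic_segment S a b \<gamma> \<longleftrightarrow>
     \<gamma> 0 = a \<and> \<gamma> (dist a b) = b \<and> \<gamma> ` {0..dist a b} \<subseteq> S \<and>
     (\<forall>s\<in>{0..dist a b}. \<forall>t\<in>{0..dist a b}. dist (\<gamma> s) (\<gamma> t) = \<bar>s - t\<bar>)"

definition geodesic_space :: "'a::metric_space set \<Rightarrow> bool" where
  "geodesic_space S \<longleftrightarrow> (\<forall>a\<in>S. \<forall>b\<in>S. \<exists>\<gamma>. geodesic_segment S a b \<gamma>)"

text \<open>A side of a geodesic triangle together with its comparison side in the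
  Euclidean plane (modelled as complex numbers): (geodesic, start and end of
  the comparison segment, length).\<close>
definition cat0_comparison ::
  "((real \<Rightarrow> 'a::metric_space) \<times> complex \<times> complex \<times> real) set \<Rightarrow> bool" where
  "cat0_comparison sides \<longleftrightarrow>
     (\<forall>(\<sigma>, P, Q, L)\<in>sides. \<forall>(\<tau>, R, R', M)\<in>sides. \<forall>s\<in>{0..L}. \<forall>t\<in>{0..M}.
        dist (\<sigma> s) (\<tau> t)
          \<le> dist (P + of_real (s / L) * (Q - P)) (R + of_real (t / M) * (R' - R)))"

definition CAT0 :: "'a::metric_space set \<Rightarrow> bool" where
  "CAT0 S \<longleftrightarrow> geodesic_space S \<and>
     (\<forall>a\<in>S. \<forall>b\<in>S. \<forall>c\<in>S. \<forall>\<gamma>ab \<gamma>bc \<gamma>ca. \<forall>a' b' c' :: complex.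
        geodesic_segment S a b \<gamma>ab \<and> geodesic_segment S b c \<gamma>bc \<and> geodesic_segment S c a \<gamma>ca \<and>
        dist a' b' = dist a b \<and> dist b' c' = dist b c \<and> dist c' a' = dist c a \<longrightarrow>
        cat0_comparison {(\<gamma>ab, a', b', dist a b), (\<gamma>bc, b', c', dist b c), (\<gamma>ca, c', a', dist c a)})"

definition proper_space :: "'a::metric_space set \<Rightarrow> bool" where
  "proper_space S \<longleftrightarrow> (\<forall>K. K \<subseteq> S \<and> closed K \<and> bounded K \<longrightarrow> compact K)"

definition isometry :: "('a::metric_space \<Rightarrow> 'a) \<Rightarrow> bool" where
  "isometry T \<longleftrightarrow> surj T \<and> (\<forall>x y. dist (T x) (T y) = dist x y)"

text \<open>h_y and the metric compactification (closure in the product topology of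
  pointwise convergence on 'a \<Rightarrow> real; all its elements are 1-Lipschitz).\<close>
definition horofun :: "'a::metric_space \<Rightarrow> 'a \<Rightarrow> 'a \<Rightarrow> real" where
  "horofun x0 y = (\<lambda>x. dist x y - dist x0 y)"

definition metric_compactification :: "'a::metric_space \<Rightarrow> ('a \<Rightarrow> real) set" where
  "metric_compactification x0 = closure (range (horofun x0))"

definition isom_action :: "'a \<Rightarrow> ('a \<Rightarrow> 'a) \<Rightarrow> ('a \<Rightarrow> real) \<Rightarrow> ('a \<Rightarrow> real)" where
  "isom_action x0 T h = (\<lambda>x. h (inv T x) - h (inv T x0))"

definition geodesic_ray :: "(real \<Rightarrow> 'a::metric_space) \<Rightarrow> bool" where
  "geodesic_ray \<gamma> \<longleftrightarrow> (\<forall>s\<ge>0. \<forall>t\<ge>0. dist (\<gamma> s) (\<gamma> t) = \<bar>s - t\<bar>)"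

definition asymptotic :: "(real \<Rightarrow> 'a::metric_space) \<Rightarrow> (real \<Rightarrow> 'a) \<Rightarrow> bool" where
  "asymptotic \<gamma> \<delta> \<longleftrightarrow> (\<exists>C. \<forall>t\<ge>0. dist (\<gamma> t) (\<delta> t) \<le> C)"

text \<open>T fixes a point of the visual compactification X \<union> \<partial>X: either a point
  of X, or the class of some ray (T acts by [\<gamma>] \<mapsto> [T \<circ> \<gamma>]).\<close>
definition fixes_visual_point :: "('a::metric_space \<Rightarrow> 'a) \<Rightarrow> bool" where
  "fixes_visual_point T \<longleftrightarrow> (\<exists>x. T x = x) \<or> (\<exists>\<gamma>. geodesic_ray \<gamma> \<and> asymptotic (T \<circ> \<gamma>) \<gamma>)"

end

theory Submission
  imports Defs
begin


lemma euclid_stewart: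
  fixes a b c :: complex and l :: real
  shows "(cmod (c - (a + of_real l * (b - a))))^2
     = (1-l)*(cmod (c-a))^2 + l*(cmod (c-b))^2 - l*(1-l)*(cmod (b-a))^2"
  unfolding cmod_power2 by (simp add: algebra_simps power2_eq_square)

lemma comparison_triangle:
  fixes a b c :: "'a::metric_space"
  shows "\<exists>a' b' c' :: complex. dist a' b' = dist a b \<and> dist b' c' = dist b c \<and> dist c' a' = dist c a"
proof -
  define p where "p = dist a b"
  define q where "q = dist b c"
  define r where "r = dist c a"
  have t1: "q \<le> p + r" "p \<le> q + r" "r \<le> p + q" "p \<ge> 0" "q \<ge> 0" "r \<ge> 0"
    unfolding p_def q_def r_def by (simp_all add: dist_triangle2 dist_triangle3 dist_commute)
      (metis dist_commute dist_triangle2)+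
  show ?thesis
  proof (cases "p = 0")
    case True
    hence "q = r" using t1 by auto
    thus ?thesis using True t1
      by (intro exI[of _ 0] exI[of _ "of_real p"] exI[of _ "of_real r"])
         (simp add: p_def[symmetric] q_def[symmetric] r_def[symmetric] dist_norm)
  next
    case False
    hence pp: "p > 0" using t1 by auto
    define u where "u = (p^2 + r^2 - q^2) / (2*p)"
    have "(p^2 + r^2 - q^2)^2 \<le> (2*p*r)^2"
    proof -
      have "(p - r)^2 \<le> q^2" using t1 abs_le_square_iff[of "p-r" q] by (simp add: abs_le_iff)
      moreover have "q^2 \<le> (p + r)^2" using t1 by (simp add: power_mono)
      ultimately have "\<bar>p^2 + r^2 - q^2\<bar> \<le> \<bar>2*p*r\<bar>" using t1
        by (simp add: power2_eq_square algebra_simps abs_le_iff)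
      thus ?thesis using abs_le_square_iff by blast
    qed
    hence u2: "u^2 \<le> r^2" unfolding u_def using pp
      by (simp add: power_divide field_simps)
    define v where "v = sqrt (r^2 - u^2)"
    have v2: "v^2 = r^2 - u^2" unfolding v_def using u2 by simp
    have e1: "cmod (Complex u v) = r"
      using v2 t1 by (simp add: cmod_def)
    have "(u - p)^2 + v^2 = q^2"
      using v2 pp unfolding u_def by (simp add: field_simps power2_eq_square)
    hence e2: "cmod (of_real p - Complex u v) = q"
      using t1 by (simp add: cmod_def complex_of_real_def power2_commute real_sqrt_unique)
    show ?thesis
      by (intro exI[of _ 0] exI[of _ "of_real p"] exI[of _ "Complex u v"])
         (use e1 e2 t1 in \<open>simp add: p_def[symmetric] q_def[symmetric] r_def[symmetric] dist_norm\<close>)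
  qed
qed

lemma cat0_cmp:
  fixes a b c :: "'a::metric_space" and a' b' c' :: complex
  assumes cat: "CAT0 (UNIV::'a set)"
    and g: "geodesic_segment UNIV a b g1" "geodesic_segment UNIV b c g2" "geodesic_segment UNIV c a g3"
    and d: "dist a' b' = dist a b" "dist b' c' = dist b c" "dist c' a' = dist c a"
    and m: "(\<sigma>,P,Q,L) \<in> {(g1, a', b', dist a b), (g2, b', c', dist b c), (g3, c', a', dist c a)}"
           "(\<tau>,R,R',M) \<in> {(g1, a', b', dist a b), (g2, b', c', dist b c), (g3, c', a', dist c a)}"
    and st: "s \<in> {0..L}" "t \<in> {0..M}"
  shows "dist (\<sigma> s) (\<tau> t) \<le> dist (P + of_real (s / L) * (Q - P)) (R + of_real (t / M) * (R' - R))"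
proof -
  have "cat0_comparison {(g1, a', b', dist a b), (g2, b', c', dist b c), (g3, c', a', dist c a)}"
    using cat g d unfolding CAT0_def by blast
  thus ?thesis using m st unfolding cat0_comparison_def by fastforce
qed

lemma geodesic_exists:
  assumes "CAT0 (UNIV::'a::metric_space set)"
  shows "\<exists>g. geodesic_segment UNIV (a::'a) b g"
  using assms unfolding CAT0_def geodesic_space_def by blast

lemma geo_start: "geodesic_segment S a b g \<Longrightarrow> g 0 = a"
  and geo_end: "geodesic_segment S a b g \<Longrightarrow> g (dist a b) = b"
  by (auto simp: geodesic_segment_def)

lemma geo_dist: "geodesic_segment S a b g \<Longrightarrow> s \<in> {0..dist a b} \<Longrightarrow> t \<in> {0..dist a b}
  \<Longrightarrow> dist (g s) (g t) = \<bar>s - t\<bar>"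
  by (auto simp: geodesic_segment_def)

lemma geo_dist_start: "geodesic_segment S a b g \<Longrightarrow> 0 \<le> s \<Longrightarrow> s \<le> dist a b \<Longrightarrow> dist a (g s) = s"
  using geo_dist[of S a b g 0 s] by (auto simp: geodesic_segment_def)

lemma geo_dist_end: "geodesic_segment S a b g \<Longrightarrow> 0 \<le> s \<Longrightarrow> s \<le> dist a b \<Longrightarrow> dist (g s) b = dist a b - s"
  using geo_dist[of S a b g s "dist a b"] by (auto simp: geodesic_segment_def)

lemma geo_reverse:
  assumes "geodesic_segment UNIV a b g"
  shows "geodesic_segment UNIV b a (\<lambda>s. g (dist a b - s))"
  using assms unfolding geodesic_segment_def by (auto simp: dist_commute)

lemma geo_isometry:
  assumes "geodesic_segment UNIV a b g" "isometry T"
  shows "geodesic_segment UNIV (T a) (T b) (T \<circ> g)"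
  using assms unfolding geodesic_segment_def isometry_def by auto

lemma stewart:
  fixes p q z :: "'a::metric_space"
  assumes cat: "CAT0 (UNIV::'a set)" and g: "geodesic_segment UNIV p q g"
    and s: "0 \<le> s" "s \<le> dist p q" and L: "dist p q > 0"
  shows "(dist z (g s))^2 \<le> (1 - s / dist p q) * (dist z p)^2 + (s / dist p q) * (dist z q)^2
            - s * (dist p q - s)"
proof -
  obtain g2 where g2: "geodesic_segment UNIV q z g2" using geodesic_exists[OF cat] by blast
  obtain g3 where g3: "geodesic_segment UNIV z p g3" using geodesic_exists[OF cat] by blast
  obtain a' b' c' :: complex where d: "dist a' b' = dist p q" "dist b' c' = dist q z" "dist c' a' = dist z p"
    using comparison_triangle by blast
  have "dist (g3 0) (g s) \<le> dist (c' + of_real (0 / dist z p) * (a' - c')) (a' + of_real (s / dist p q) * (b' - a'))"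
    by (rule cat0_cmp[OF cat g g2 g3 d]) (use s in auto)
  hence "dist z (g s) \<le> cmod (c' - (a' + of_real (s / dist p q) * (b' - a')))"
    using geo_start[OF g3] by (simp add: dist_norm)
  hence "(dist z (g s))^2 \<le> (cmod (c' - (a' + of_real (s / dist p q) * (b' - a'))))^2"
    by (simp add: power_mono)
  also have "\<dots> = (1 - s / dist p q) * (dist z p)^2 + (s / dist p q) * (dist z q)^2
       - (s / dist p q) * (1 - s / dist p q) * (dist p q)^2"
    unfolding euclid_stewart using d by (simp add: dist_norm norm_minus_commute dist_commute)
  also have "(s / dist p q) * (1 - s / dist p q) * (dist p q)^2 = s * (dist p q - s)"
    using L by (simp add: field_simps power2_eq_square)
  finally show ?thesis .
qed

lemma fan_cmp:
  fixes y x x0 :: "'a::metric_space"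
  assumes cat: "CAT0 (UNIV::'a set)" and g: "geodesic_segment UNIV y x g"
    and g': "geodesic_segment UNIV y x0 g'"
    and t: "0 \<le> t" "t \<le> dist y x" and t': "0 \<le> t'" "t' \<le> dist y x0"
  shows "\<exists>e f :: complex. cmod e = dist y x \<and> cmod f = dist y x0 \<and> cmod (e - f) = dist x x0 \<and>
     dist (g t) (g' t') \<le> cmod (of_real (t / dist y x) * e - of_real (t' / dist y x0) * f)"
proof -
  define L0 where "L0 = dist y x0"
  obtain g2 where g2: "geodesic_segment UNIV x x0 g2" using geodesic_exists[OF cat] by blast
  have g3: "geodesic_segment UNIV x0 y (\<lambda>s. g' (L0 - s))"
    using geo_reverse[OF g'] unfolding L0_def .
  obtain a' b' c' :: complex where d: "dist a' b' = dist y x" "dist b' c' = dist x x0" "dist c' a' = dist x0 y"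
    using comparison_triangle by blast
  have "dist (g t) ((\<lambda>s. g' (L0 - s)) (L0 - t')) \<le>
     dist (a' + of_real (t / dist y x) * (b' - a')) (c' + of_real ((L0 - t') / dist x0 y) * (a' - c'))"
    by (rule cat0_cmp[OF cat g g2 g3 d]) (use t t' in \<open>auto simp: L0_def dist_commute\<close>)
  hence *: "dist (g t) (g' t') \<le> dist (a' + of_real (t / dist y x) * (b' - a')) (c' + of_real ((L0 - t') / L0) * (a' - c'))"
    by (simp add: L0_def dist_commute)
  have "c' + of_real ((L0 - t') / L0) * (a' - c') = a' + of_real (t' / L0) * (c' - a')"
  proof (cases "L0 = 0")
    case True
    hence "c' = a'" using d by (simp add: L0_def dist_commute)
    thus ?thesis using True by simp
  next
    case False
    hence "of_real ((L0 - t') / L0) = (1 - of_real (t' / L0) :: complex)"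
      by (simp add: field_simps)
    moreover have "c' + (1 - l) * (a' - c') = a' + l * (c' - a')" for l :: complex
      by (simp add: algebra_simps)
    ultimately show ?thesis by simp
  qed
  hence "dist (g t) (g' t') \<le> cmod (of_real (t / dist y x) * (b' - a') - of_real (t' / L0) * (c' - a'))"
    using * by (simp add: dist_norm algebra_simps)
  moreover have "cmod (b' - a') = dist y x" "cmod (c' - a') = dist y x0" "cmod ((b' - a') - (c' - a')) = dist x x0"
    using d by (auto simp: dist_norm norm_minus_commute dist_commute)
  ultimately show ?thesis unfolding L0_def by blast
qed

lemma mm0_bound:
  fixes y x x0 :: "'a::metric_space"
  assumes cat: "CAT0 (UNIV::'a set)" and g: "geodesic_segment UNIV y x g"
    and g': "geodesic_segment UNIV y x0 g'"
    and t: "0 \<le> t" "t \<le> dist y x" "t \<le> dist y x0" and L: "dist y x > 0"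
  shows "dist (g t) (g' t) \<le> 2 * t * dist x x0 / dist y x"
proof -
  define L where "L = dist y x"
  define L0 where "L0 = dist y x0"
  define D where "D = dist x x0"
  obtain e f where ef: "cmod e = L" "cmod f = L0" "cmod (e - f) = D"
    and le: "dist (g t) (g' t) \<le> cmod (of_real (t / L) * e - of_real (t / L0) * f)"
    using fan_cmp[OF cat g g' t(1,2) t(1,3)] unfolding L_def L0_def D_def by blast
  show ?thesis
  proof (cases "t = 0")
    case True
    thus ?thesis using geo_start[OF g] geo_start[OF g'] by simp
  next
    case False
  have L0p: "L0 > 0" using False L t unfolding L0_def L_def by linarith
  have LL: "\<bar>L0 - L\<bar> \<le> D" unfolding L0_def L_def D_def
    by (metis abs_diff_le_iff dist_commute dist_triangle2 dist_triangle3 diff_le_eq add.commute)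
  have oo: "of_real (t * (1/L - 1/L0)) = (of_real (t/L) - of_real (t/L0) :: complex)"
    by (simp add: algebra_simps)
  have gen: "a * e - b * f = a * (e - f) + (a - b) * f" for a b :: complex
    by (simp add: algebra_simps)
  have "of_real (t / L) * e - of_real (t / L0) * f = of_real (t/L) * (e - f) + of_real (t * (1/L - 1/L0)) * f"
    unfolding oo by (rule gen)
  hence A: "cmod (of_real (t / L) * e - of_real (t / L0) * f) \<le> (t/L) * D + \<bar>t * (1/L - 1/L0)\<bar> * L0"
    using ef L t L0p
    by (metis (no_types, lifting) abs_of_nonneg divide_nonneg_nonneg dual_order.refl L_def norm_mult norm_of_real norm_triangle_le zero_le_dist)
  have B: "\<bar>t * (1/L - 1/L0)\<bar> * L0 = t * \<bar>L0 - L\<bar> / L"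
  proof -
    have "1/L - 1/L0 = (L0 - L)/(L*L0)" using L L0p unfolding L_def[symmetric] by (simp add: field_simps)
    hence "\<bar>t * (1/L - 1/L0)\<bar> * L0 = t * (\<bar>L0 - L\<bar> / (L*L0)) * L0"
      using L L0p t unfolding L_def[symmetric] by (simp add: abs_mult abs_divide)
    also have "\<dots> = t * \<bar>L0 - L\<bar> / L" using L0p by (simp add: field_simps)
    finally show ?thesis .
  qed
  have C: "t * \<bar>L0 - L\<bar> / L \<le> t * D / L"
    using LL t L unfolding L_def[symmetric] by (simp add: divide_right_mono mult_left_mono)
  have "cmod (of_real (t / L) * e - of_real (t / L0) * f) \<le> (t/L) * D + t * D / L" using A B C by linarith
  moreover have "(t/L) * D + t * D / L = 2 * t * D / L" by (simp add: field_simps)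
  ultimately show ?thesis using le unfolding L_def D_def by linarith
  qed
qed

lemma est_arith:
  fixes L t d u A :: real
  assumes L: "t \<le> L" and t: "t > 0" and d: "d \<ge> 0" and u: "u \<ge> 0" and A: "A \<ge> 0"
    and ut: "u \<le> t + d" "t \<le> u + d" and AB: "A \<le> L - t + u"
    and st: "u^2 \<le> (1 - t/L) * d^2 + (t/L) * A^2 - t * (L - t)"
  shows "L - t + u - A \<le> d^2 / t"
proof -
  define B where "B = L - t + u"
  have Lp: "L > 0" using L t by linarith
  have "L * u^2 \<le> L * ((1 - t/L) * d^2 + (t/L) * A^2 - t * (L - t))"
    using st Lp by (simp add: mult_left_mono)
  also have "\<dots> = (L - t) * d^2 + t * A^2 - t * L * (L - t)"
    using Lp by (simp add: field_simps)
  finally have st2: "L * u^2 \<le> (L - t) * d^2 + t * A^2 - t * L * (L - t)" .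
  have "t * B^2 - t * A^2 \<le> (L - t) * (d^2 - (u - t)^2)"
    using st2 unfolding B_def by (simp add: power2_eq_square algebra_simps)
  also have "\<dots> \<le> (L - t) * d^2"
    using L by (simp add: mult_left_mono)
  finally have k: "t * (B - A) * (B + A) \<le> (L - t) * d^2"
    by (simp add: power2_eq_square algebra_simps)
  show ?thesis
  proof (rule ccontr)
    assume "\<not> ?thesis"
    hence g: "B - A > d^2 / t" unfolding B_def by simp
    hence g2: "t * (B - A) > d^2" using t by (simp add: field_simps)
    have BA: "B + A \<ge> L - t" unfolding B_def using u A by simp
    have "d^2 / t \<ge> 0" using t by simp
    hence pos: "B - A > 0" using g by linarith
    have "t * (B - A) * (B + A) \<ge> d^2 * (B + A)"
      using g2 BA L A u unfolding B_def by (intro mult_right_mono) auto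
    moreover have "d^2 * (B + A) \<ge> d^2 * (L - t)"
      using BA by (simp add: mult_left_mono)
    moreover have "B + A > 0" using pos A by linarith
    hence "t * (B - A) * (B + A) > d^2 * (B + A)" using g2 by simp
    moreover have "d^2 * (L - t) = (L - t) * d^2" by (simp add: mult.commute)
    ultimately show False using k by linarith
  qed
qed


lemma one_side_est:
  fixes y x y' :: "'a::metric_space"
  assumes cat: "CAT0 (UNIV::'a set)" and g: "geodesic_segment UNIV y x g"
    and t: "0 < t" "t \<le> dist y x"
  shows "dist x y' \<le> dist y x - t + dist y' (g t)
       \<and> dist y x - t + dist y' (g t) - dist x y' \<le> (dist y y')^2 / t"
proof -
  define L where "L = dist y x"
  have Lp: "L > 0" using t unfolding L_def by linarith
  have ym: "dist y (g t) = t" using geo_dist_start[OF g] t by simp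
  have mx: "dist (g t) x = L - t" using geo_dist_end[OF g] t unfolding L_def by simp
  have AB: "dist x y' \<le> L - t + dist y' (g t)"
    using dist_triangle[of x y' "g t"] mx by (simp add: dist_commute)
  have ut1: "dist y' (g t) \<le> t + dist y y'"
    using dist_triangle[of y' "g t" y] ym by (simp add: dist_commute)
  have ut2: "t \<le> dist y' (g t) + dist y y'"
    using dist_triangle[of y "g t" y'] ym by (simp add: dist_commute)
  have st: "(dist y' (g t))^2 \<le> (1 - t / L) * (dist y' y)^2 + (t / L) * (dist y' x)^2 - t * (L - t)"
    using stewart[OF cat g, of t y'] t Lp unfolding L_def by simp
  have "L - t + dist y' (g t) - dist x y' \<le> (dist y y')^2 / t"
    by (rule est_arith[of t L "dist y y'" "dist y' (g t)" "dist x y'"])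
       (use t ut1 ut2 AB st L_def in \<open>auto simp: dist_commute\<close>)
  thus ?thesis using AB unfolding L_def by simp
qed

lemma horo_close:
  fixes y x x0 y' :: "'a::metric_space"
  assumes cat: "CAT0 (UNIV::'a set)"
    and t: "0 < t" "t \<le> dist y x" "t \<le> dist y x0"
  shows "\<bar>(dist x y' - dist x0 y') - (dist x y - dist x0 y)\<bar>
          \<le> 2 * t * dist x x0 / dist y x + (dist y y')^2 / t"
proof -
  obtain g where g: "geodesic_segment UNIV y x g" using geodesic_exists[OF cat] by blast
  obtain g' where g': "geodesic_segment UNIV y x0 g'" using geodesic_exists[OF cat] by blast
  note e1 = one_side_est[OF cat g t(1,2), of y']
  note e2 = one_side_est[OF cat g' t(1,3), of y']
  have mm: "dist (g t) (g' t) \<le> 2 * t * dist x x0 / dist y x"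
    by (rule mm0_bound[OF cat g g']) (use t in auto)
  have uu: "\<bar>dist y' (g t) - dist y' (g' t)\<bar> \<le> dist (g t) (g' t)"
    by (metis abs_le_iff dist_commute dist_triangle2 dist_triangle3 diff_le_eq add.commute minus_diff_eq)
  show ?thesis using e1 e2 mm uu by (simp add: dist_commute abs_le_iff)
qed

lemma horo_close_eventually:
  fixes x x0 :: "'a::metric_space"
  assumes cat: "CAT0 (UNIV::'a set)" and e: "e > 0" and c: "c \<ge> 0"
  shows "\<exists>R. \<forall>y y'. dist y y' \<le> c \<longrightarrow> dist x0 y \<ge> R \<longrightarrow>
     \<bar>(dist x y' - dist x0 y') - (dist x y - dist x0 y)\<bar> \<le> e"
proof -
  define D where "D = dist x x0"
  define t where "t = 2 * c^2 / e + 1"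
  have tp: "t > 0" unfolding t_def using e by (simp add: add_nonneg_pos)
  define R where "R = t + D + 4 * t * D / e + 1"
  have D0: "D \<ge> 0" unfolding D_def by simp
  show ?thesis
  proof (intro exI allI impI)
    fix y y' :: 'a assume yy: "dist y y' \<le> c" and R: "dist x0 y \<ge> R"
    have L: "dist y x \<ge> dist x0 y - D" unfolding D_def
      by (metis diff_le_eq dist_commute dist_triangle2)
    have q: "4 * t * D / e \<ge> 0" using tp D0 e by simp
    have L1: "dist y x \<ge> t + 4 * t * D / e + 1" using L R unfolding R_def by linarith
    have L0: "dist y x0 \<ge> t" using R q D0 unfolding R_def by (simp add: dist_commute)
    note hc = horo_close[OF cat tp, of y x x0 y']
    have Lp: "dist y x > 0" using L1 tp q by linarith
    have a1: "2 * t * D / dist y x \<le> e / 2"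
    proof -
      have "4 * t * D \<le> e * dist y x"
      proof -
        have "e * (4 * t * D / e) \<le> e * dist y x" using L1 tp e by (intro mult_left_mono) auto
        thus ?thesis using e by simp
      qed
      thus ?thesis using Lp by (simp add: field_simps)
    qed
    have a2: "(dist y y')^2 / t \<le> e / 2"
    proof -
      have "(dist y y')^2 \<le> c^2" using yy by (simp add: power_mono)
      also have "c^2 \<le> e/2 * t" unfolding t_def using e by (simp add: field_simps)
      finally show ?thesis using tp by (simp add: field_simps)
    qed
    show "\<bar>(dist x y' - dist x0 y') - (dist x y - dist x0 y)\<bar> \<le> e"
      using hc L1 L0 tp q a1 a2 unfolding D_def by linarith
  qed
qed



lemma midpoint_cn:
  fixes x z :: "'a::metric_space"
  assumes cat: "CAT0 (UNIV::'a set)"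
  shows "\<exists>m. \<forall>a. (dist a m)^2 \<le> ((dist a x)^2 + (dist a z)^2) / 2 - (dist x z)^2 / 4"
proof (cases "x = z")
  case True
  thus ?thesis by (intro exI[of _ x]) simp
next
  case False
  hence L: "dist x z > 0" by simp
  obtain g where g: "geodesic_segment UNIV x z g" using geodesic_exists[OF cat] by blast
  show ?thesis
  proof (intro exI allI)
    fix a
    have "(dist a (g (dist x z / 2)))^2 \<le> (1 - (dist x z / 2) / dist x z) * (dist a x)^2
        + ((dist x z / 2) / dist x z) * (dist a z)^2 - (dist x z / 2) * (dist x z - dist x z / 2)"
      by (rule stewart[OF cat g]) (use L in auto)
    also have "\<dots> = ((dist a x)^2 + (dist a z)^2) / 2 - (dist x z)^2 / 4"
      using L by (simp add: field_simps power2_eq_square)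
    finally show "(dist a (g (dist x z / 2)))^2 \<le> ((dist a x)^2 + (dist a z)^2) / 2 - (dist x z)^2 / 4" .
  qed
qed

lemma bounded_orbit_fixed:
  fixes T :: "'a::complete_space \<Rightarrow> 'a" and x0 :: 'a
  assumes cat: "CAT0 (UNIV::'a set)" and iso: "isometry T"
    and bdd: "bounded (range (\<lambda>n. (T^^n) x0))"
  shows "\<exists>c. T c = c"
proof -
  define orb where "orb n = (T^^n) x0" for n
  obtain B where B: "\<And>n. dist x0 (orb n) \<le> B"
    using bdd unfolding bounded_any_center[of _ x0] orb_def by auto
  define r where "r x = (SUP n. dist x (orb n))" for x
  have bddr: "bdd_above (range (\<lambda>n. dist x (orb n)))" for x
  proof
    fix v assume "v \<in> range (\<lambda>n. dist x (orb n))"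
    then obtain n where "v = dist x (orb n)" by auto
    thus "v \<le> dist x x0 + B" using B[of n] dist_triangle[of x "orb n" x0] by simp
  qed
  have r_ge: "dist x (orb n) \<le> r x" for x n
    unfolding r_def by (rule cSUP_upper[OF _ bddr]) auto
  have r_le: "r x \<le> c" if "\<And>n. dist x (orb n) \<le> c" for x c
    unfolding r_def by (rule cSUP_least) (use that in auto)
  have r_nn: "0 \<le> r x" for x using r_ge[of x 0] zero_le_dist[of x "orb 0"] by linarith
  have r_lip: "r x \<le> r y + dist x y" for x y
  proof (rule r_le)
    fix n show "dist x (orb n) \<le> r y + dist x y"
      using r_ge[of y n] dist_triangle[of x "orb n" y] by simp
  qed
  have Tinv: "T (inv T x) = x" for x using iso unfolding isometry_def by (simp add: surj_f_inv_f)
  have Tdist: "dist (T x) (T y) = dist x y" for x y using iso unfolding isometry_def by simp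
  have r_inv: "r (inv T x) \<le> r x" for x
  proof (rule r_le)
    fix n
    have "dist (inv T x) (orb n) = dist x (orb (Suc n))"
      using Tdist[of "inv T x" "orb n"] Tinv[of x] by (simp add: orb_def)
    thus "dist (inv T x) (orb n) \<le> r x" using r_ge by simp
  qed
  define \<rho> where "\<rho> = Inf (range r)"
  have bddb: "bdd_below (range r)" using r_nn by (intro bdd_belowI[of _ 0]) auto
  have rho_le: "\<rho> \<le> r x" for x unfolding \<rho>_def by (rule cInf_lower[OF _ bddb]) auto
  have rho_nn: "0 \<le> \<rho>" unfolding \<rho>_def by (rule cInf_greatest) (auto simp: r_nn)
  have rho_approx: "\<exists>x. r x < \<rho> + e" if "e > 0" for e
  proof -
    have "Inf (range r) < \<rho> + e" using that unfolding \<rho>_def by simp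
    then obtain v where "v \<in> range r" "v < \<rho> + e" using cInf_lessD[of "range r"] by blast
    thus ?thesis by auto
  qed
  have key: "(dist x z)^2 / 4 \<le> ((r x)^2 + (r z)^2) / 2 - \<rho>^2" for x z
  proof -
    obtain m where m: "\<And>a. (dist a m)^2 \<le> ((dist a x)^2 + (dist a z)^2) / 2 - (dist x z)^2 / 4"
      using midpoint_cn[OF cat] by blast
    define K where "K = ((r x)^2 + (r z)^2) / 2 - (dist x z)^2 / 4"
    have "dist m (orb n) \<le> sqrt K" for n
    proof -
      have "(dist m (orb n))^2 \<le> ((dist (orb n) x)^2 + (dist (orb n) z)^2) / 2 - (dist x z)^2 / 4"
        using m[of "orb n"] by (simp add: dist_commute)
      also have "\<dots> \<le> K" unfolding K_def
        using power_mono[OF r_ge[of x n] zero_le_dist, of 2] power_mono[OF r_ge[of z n] zero_le_dist, of 2]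
        by (simp add: dist_commute)
      finally show ?thesis by (simp add: real_le_rsqrt)
    qed
    hence "r m \<le> sqrt K" by (rule r_le)
    hence "\<rho> \<le> sqrt K" using rho_le[of m] by linarith
    hence "\<rho>^2 \<le> K" using rho_nn
      by (metis abs_of_nonneg real_sqrt_abs real_sqrt_le_iff sqrt_le_D)
    thus ?thesis unfolding K_def by argo
  qed
  have "\<forall>n. \<exists>x. r x < \<rho> + 1 / (real n + 1)"
    using rho_approx by simp
  then obtain xs where xs: "\<And>n. r (xs n) < \<rho> + 1 / (real n + 1)" by metis
  have sq: "(r (xs n))^2 - \<rho>^2 \<le> (2 * \<rho> + 1) / (real n + 1)" for n
  proof -
    have "(r (xs n))^2 \<le> (\<rho> + 1 / (real n + 1))^2"
      using xs[of n] r_nn by (intro power_mono) auto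
    also have "\<dots> = \<rho>^2 + (2 * \<rho> + 1 / (real n + 1)) * (1 / (real n + 1))"
      by (simp add: power2_eq_square algebra_simps)
    also have "(2 * \<rho> + 1 / (real n + 1)) * (1 / (real n + 1)) \<le> (2 * \<rho> + 1) * (1 / (real n + 1))"
      by (intro mult_right_mono) (auto simp: field_simps)
    finally show ?thesis by simp
  qed
  have "Cauchy xs"
  proof (rule metric_CauchyI)
    fix e :: real assume e: "e > 0"
    obtain N :: nat where N: "4 * (2 * \<rho> + 1) / e^2 < real N"
      using reals_Archimedean2 by blast
    have Nb: "4 * (2 * \<rho> + 1) / (real N + 1) < e^2"
    proof -
      have "0 < e^2" using e by simp
      hence "4 * (2 * \<rho> + 1) < real N * e^2" using N by (simp add: field_simps)
      also have "\<dots> \<le> (real N + 1) * e^2" using e by (simp add: field_simps)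
      finally show ?thesis by (simp add: field_simps)
    qed
    show "\<exists>M. \<forall>m\<ge>M. \<forall>n\<ge>M. dist (xs m) (xs n) < e"
    proof (intro exI allI impI)
      fix m n assume mn: "N \<le> m" "N \<le> n"
      have mon: "(2 * \<rho> + 1) / (real k + 1) \<le> (2 * \<rho> + 1) / (real N + 1)" if "N \<le> k" for k
        using that rho_nn by (intro divide_left_mono) auto
      have "(dist (xs m) (xs n))^2 / 4 \<le> ((r (xs m))^2 + (r (xs n))^2) / 2 - \<rho>^2" by (rule key)
      hence "(dist (xs m) (xs n))^2 \<le> 2 * ((r (xs m))^2 - \<rho>^2) + 2 * ((r (xs n))^2 - \<rho>^2)" by argo
      also have "\<dots> \<le> 4 * (2 * \<rho> + 1) / (real N + 1)"
        using sq[of m] sq[of n] mon[OF mn(1)] mon[OF mn(2)]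
          times_divide_eq_right[of 4 "2 * \<rho> + 1" "real N + 1"] by argo
      also have "\<dots> < e^2" by (rule Nb)
      finally show "dist (xs m) (xs n) < e"
        using e by (metis abs_of_pos power_less_imp_less_base zero_le_dist less_le)
    qed
  qed
  then obtain c where c: "xs \<longlonglongrightarrow> c" using Cauchy_convergent_iff convergent_def by blast
  have rc: "r c \<le> \<rho>"
  proof (rule ccontr)
    assume "\<not> r c \<le> \<rho>"
    define \<eta> where "\<eta> = r c - \<rho>"
    have eta: "\<eta> > 0" using \<open>\<not> r c \<le> \<rho>\<close> unfolding \<eta>_def by simp
    have "\<forall>\<^sub>F n in sequentially. dist (xs n) c < \<eta> / 2"
      using c eta unfolding tendsto_iff by (meson half_gt_zero)
    moreover have "\<forall>\<^sub>F n in sequentially. 1 / (real n + 1) < \<eta> / 2"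
    proof -
      have "(\<lambda>n. 1 / (real n + 1)) \<longlonglongrightarrow> 0" 
        using LIMSEQ_inverse_real_of_nat by (simp add: inverse_eq_divide add.commute)
      hence "\<forall>u>0. \<forall>\<^sub>F x in sequentially. 1 / (real x + 1) < u" unfolding order_tendsto_iff by blast
      thus ?thesis using eta half_gt_zero by blast
    qed
    ultimately obtain n where n: "dist (xs n) c < \<eta> / 2" "1 / (real n + 1) < \<eta> / 2"
      using eventually_happens'[OF sequentially_bot] eventually_conj by (metis (mono_tags, lifting))
    have "r c \<le> r (xs n) + dist c (xs n)" by (rule r_lip)
    thus False using xs[of n] n unfolding \<eta>_def by (simp add: dist_commute)
  qed
  have "(dist c (inv T c))^2 / 4 \<le> ((r c)^2 + (r (inv T c))^2) / 2 - \<rho>^2" by (rule key)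
  moreover have "(r c)^2 \<le> \<rho>^2" using rc r_nn by (simp add: power_mono)
  moreover have "(r (inv T c))^2 \<le> \<rho>^2" using r_inv[of c] rc r_nn by (simp add: power_mono)
  ultimately have "(dist c (inv T c))^2 \<le> 0" by argo
  hence "c = inv T c" by simp
  hence "T c = c" using Tinv[of c] by simp
  thus ?thesis by blast
qed



lemma fan_prop:
  fixes y x x0 :: "'a::metric_space"
  assumes cat: "CAT0 (UNIV::'a set)" and g: "geodesic_segment UNIV y x g"
    and g': "geodesic_segment UNIV y x0 g'" and Lp: "dist y x > 0"
    and l: "0 \<le> l" "l \<le> 1"
  shows "dist (g (l * dist y x)) (g' (l * dist y x0)) \<le> l * dist x x0"
proof -
  have a: "0 \<le> l * dist y x" "l * dist y x \<le> dist y x" using l Lp by (auto simp: mult_le_cancel_right1)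
  have b: "0 \<le> l * dist y x0" "l * dist y x0 \<le> dist y x0" using l
    by (auto simp: mult_left_le_one_le)
  obtain e f where ef: "cmod e = dist y x" "cmod f = dist y x0" "cmod (e - f) = dist x x0"
    and le: "dist (g (l * dist y x)) (g' (l * dist y x0))
        \<le> cmod (of_real (l * dist y x / dist y x) * e - of_real (l * dist y x0 / dist y x0) * f)"
    using fan_cmp[OF cat g g' a b] by blast
  have "of_real (l * dist y x / dist y x) * e - of_real (l * dist y x0 / dist y x0) * f = of_real l * (e - f)"
  proof (cases "dist y x0 = 0")
    case True
    hence "f = 0" using ef by simp
    thus ?thesis using Lp by (simp add: algebra_simps)
  next
    case False
    thus ?thesis using Lp by (simp add: algebra_simps)
  qed
  hence "cmod (of_real (l * dist y x / dist y x) * e - of_real (l * dist y x0 / dist y x0) * f) = l * dist x x0"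
    using ef l by (simp add: norm_mult)
  thus ?thesis using le by simp
qed

lemma geod_convex:
  fixes p q p' q' :: "'a::metric_space"
  assumes cat: "CAT0 (UNIV::'a set)" and a: "geodesic_segment UNIV p q \<alpha>"
    and b: "geodesic_segment UNIV p' q' \<beta>" and L: "dist p' q' = dist p q"
    and s: "0 \<le> s" "s \<le> dist p q"
  shows "dist (\<alpha> s) (\<beta> s) \<le> (1 - s / dist p q) * dist p p' + (s / dist p q) * dist q q'"
proof (cases "dist p q = 0")
  case True
  hence "s = 0" using s by simp
  thus ?thesis using geo_start[OF a] geo_start[OF b] by simp
next
  case False
  define LL where "LL = dist p q"
  have Lp: "LL > 0" using False unfolding LL_def by simp
  define l where "l = s / LL"
  have l: "0 \<le> l" "l \<le> 1" using s Lp unfolding l_def LL_def by auto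
  have sl: "s = l * LL" unfolding l_def using Lp by simp
  obtain \<delta> where d: "geodesic_segment UNIV p q' \<delta>" using geodesic_exists[OF cat] by blast
  define L' where "L' = dist p q'"
  have 1: "dist (\<alpha> (l * LL)) (\<delta> (l * L')) \<le> l * dist q q'"
    using fan_prop[OF cat a d _ l] Lp unfolding LL_def L'_def by simp
  have br: "geodesic_segment UNIV q' p' (\<lambda>u. \<beta> (LL - u))"
    using geo_reverse[OF b] L unfolding LL_def by simp
  have dr: "geodesic_segment UNIV q' p (\<lambda>u. \<delta> (L' - u))"
    using geo_reverse[OF d] unfolding L'_def .
  have 2: "dist (\<beta> (LL - (1 - l) * LL)) (\<delta> (L' - (1 - l) * L')) \<le> (1 - l) * dist p' p"
    using fan_prop[OF cat br dr, of "1 - l"] l Lp L unfolding LL_def L'_def by (simp add: dist_commute)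
  have e1: "LL - (1 - l) * LL = l * LL" "L' - (1 - l) * L' = l * L'" by (simp_all add: algebra_simps)
  have "dist (\<alpha> s) (\<beta> s) \<le> dist (\<alpha> (l * LL)) (\<delta> (l * L')) + dist (\<beta> (l * LL)) (\<delta> (l * L'))"
    using sl dist_triangle[of "\<alpha> (l * LL)" "\<beta> (l * LL)" "\<delta> (l * L')"] by (simp add: dist_commute)
  also have "\<dots> \<le> l * dist q q' + (1 - l) * dist p p'"
    using 1 2 e1 by (simp add: dist_commute)
  finally show ?thesis unfolding l_def LL_def by simp
qed



lemma cluster_point_exists:
  fixes f :: "nat \<Rightarrow> 'i \<Rightarrow> 'b::metric_space"
  assumes K: "\<And>i. compact (K i)" and fK: "\<And>n i. f n i \<in> K i"
  shows "\<exists>g. (\<forall>i. g i \<in> K i) \<and> (\<forall>N. g \<in> closure (f ` {N..}))"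
proof -
  have "compactin (product_topology (\<lambda>i. euclidean) UNIV) (PiE UNIV K)"
    by (simp add: compactin_PiE K)
  hence cP: "compact (PiE UNIV K)"
    by (simp add: euclidean_product_topology)
  have "PiE UNIV K \<inter> (\<Inter>N\<in>UNIV. closure (f ` {N..})) \<noteq> {}"
  proof (rule compact_imp_fip_image[OF cP])
    fix I' :: "nat set" assume fin: "finite I'"
    define M where "M = Max (insert 0 I')"
    have "f M \<in> PiE UNIV K" using fK by auto
    moreover have "f M \<in> closure (f ` {N..})" if "N \<in> I'" for N
    proof -
      have "N \<le> M" unfolding M_def using fin that by auto
      thus ?thesis by (intro closure_subset[THEN subsetD]) auto
    qed
    ultimately show "PiE UNIV K \<inter> (\<Inter>i\<in>I'. closure (f ` {i..})) \<noteq> {}" by blast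
  qed auto
  then obtain g where "g \<in> PiE UNIV K" "\<And>N. g \<in> closure (f ` {N..})" by blast
  thus ?thesis unfolding PiE_def Pi_def by blast
qed

lemma closure_fun_near:
  fixes g :: "'i \<Rightarrow> 'b::metric_space"
  assumes "g \<in> closure S" "finite F" "e > 0"
  shows "\<exists>s\<in>S. \<forall>i\<in>F. dist (s i) (g i) < e"
proof -
  have o: "open {f. \<forall>i\<in>F. f (id i) \<in> ball (g i) e}"
    by (rule product_topology_basis') (use assms in auto)
  have "g \<in> {f. \<forall>i\<in>F. f (id i) \<in> ball (g i) e}" using assms by auto
  then obtain s where s1: "s \<in> S" and s2: "s \<in> {f. \<forall>i\<in>F. f (id i) \<in> ball (g i) e}"
    using assms(1) o unfolding closure_iff_nhds_not_empty by blast
  have "\<forall>i\<in>F. dist (s i) (g i) < e" using s2 by (simp add: dist_commute)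
  thus ?thesis using s1 by blast
qed



lemma funpow_dist:
  assumes iso: "isometry T"
  shows "dist ((T^^k) a) ((T^^k) b) = dist a b"
proof (induction k)
  case 0 show ?case by simp
next
  case (Suc k)
  have "dist (T ((T^^k) a)) (T ((T^^k) b)) = dist ((T^^k) a) ((T^^k) b)"
    using iso unfolding isometry_def by blast
  thus ?case using Suc by simp
qed

lemma isom_action_horofun:
  assumes iso: "isometry T"
  shows "isom_action x0 T (horofun x0 y) = horofun x0 (T y)"
proof -
  have Tinv: "T (inv T x) = x" for x using iso unfolding isometry_def by (simp add: surj_f_inv_f)
  have Tdist: "dist (T x) (T z) = dist x z" for x z using iso unfolding isometry_def by simp
  have "dist (inv T x) y = dist x (T y)" for x using Tdist[of "inv T x" y] Tinv[of x] by simp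
  thus ?thesis unfolding isom_action_def horofun_def by auto
qed

lemma unbounded_orbit_seq:
  fixes T :: "'a::metric_space \<Rightarrow> 'a"
  assumes iso: "isometry T" and nb: "\<not> bounded (range (\<lambda>n. (T^^n) x0))"
  shows "\<exists>ys. (\<forall>n. dist x0 (ys n) > real n) \<and> (\<forall>n. dist (ys n) (T (ys n)) = dist x0 (T x0))"
proof -
  have "\<forall>n. \<exists>k. dist x0 ((T^^k) x0) > real n"
    using nb unfolding bounded_any_center[of _ x0] by (auto simp: not_le)
  then obtain k where k: "\<And>n. dist x0 ((T^^k n) x0) > real n" by metis
  have "dist ((T^^m) x0) (T ((T^^m) x0)) = dist x0 (T x0)" for m
  proof -
    have "T ((T^^m) x0) = (T^^m) (T x0)" by (simp add: funpow_swap1)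
    thus ?thesis using funpow_dist[OF iso, of m x0 "T x0"] by simp
  qed
  thus ?thesis using k by (intro exI[of _ "\<lambda>n. (T^^k n) x0"]) auto
qed

lemma part1:
  fixes T :: "'a::complete_space \<Rightarrow> 'a" and x0 :: 'a
  assumes cat: "CAT0 (UNIV :: 'a set)" and iso: "isometry T"
  shows "\<exists>h\<in>metric_compactification x0. isom_action x0 T h = h"
proof (cases "bounded (range (\<lambda>n. (T^^n) x0))")
  case True
  then obtain c where c: "T c = c" using bounded_orbit_fixed[OF cat iso] by blast
  have "horofun x0 c \<in> metric_compactification x0"
    unfolding metric_compactification_def by (intro closure_subset[THEN subsetD]) auto
  moreover have "isom_action x0 T (horofun x0 c) = horofun x0 c"
    using isom_action_horofun[OF iso] c by simp
  ultimately show ?thesis by blast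
next
  case False
  then obtain ys where ys: "\<And>n. dist x0 (ys n) > real n"
    and yT: "\<And>n. dist (ys n) (T (ys n)) = dist x0 (T x0)"
    using unbounded_orbit_seq[OF iso] by blast
  define f where "f n = horofun x0 (ys n)" for n
  define K where "K x = {- dist x x0 .. dist x x0}" for x
  have fK: "f n x \<in> K x" for n x
    unfolding f_def K_def horofun_def using dist_triangle[of x "ys n" x0] dist_triangle[of x0 "ys n" x]
    by (auto simp: dist_commute)
  obtain g where gcl: "\<And>N. g \<in> closure (f ` {N..})"
    using cluster_point_exists[of K f] fK unfolding K_def by auto
  have "f ` {0..} \<subseteq> range (horofun x0)" unfolding f_def by auto
  hence "closure (f ` {0..}) \<subseteq> metric_compactification x0"
    unfolding metric_compactification_def by (rule closure_mono)
  hence "g \<in> metric_compactification x0" using gcl[of 0] by blast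
  moreover have "isom_action x0 T g = g"
  proof
    fix x
    let ?a = "inv T x" and ?b = "inv T x0"
    show "isom_action x0 T g x = g x"
    proof -
      have main: "\<bar>isom_action x0 T g x - g x\<bar> \<le> 4 * e" if e: "e > 0" for e
      proof -
        obtain R where R: "\<And>y y'. dist y y' \<le> dist x0 (T x0) \<Longrightarrow> dist x0 y \<ge> R \<Longrightarrow>
            \<bar>(dist x y' - dist x0 y') - (dist x y - dist x0 y)\<bar> \<le> e"
          using horo_close_eventually[OF cat e, where c = "dist x0 (T x0)" and x = x and ?x0.0 = x0] by auto
        obtain N :: nat where N: "R \<le> real N" using real_arch_simple by blast
        obtain s where s: "s \<in> f ` {N..}" and sF: "\<forall>i\<in>{?a, ?b, x}. dist (s i) (g i) < e"
          using closure_fun_near[OF gcl[of N], of "{?a, ?b, x}" e] e by auto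
        then obtain n where n: "n \<ge> N" "s = f n" by auto
        have hn: "\<bar>(dist x (T (ys n)) - dist x0 (T (ys n))) - (dist x (ys n) - dist x0 (ys n))\<bar> \<le> e"
          using R[of "ys n" "T (ys n)"] yT[of n] ys[of n] N n by simp
        have act: "isom_action x0 T (f n) x = f n x + ((dist x (T (ys n)) - dist x0 (T (ys n))) - (dist x (ys n) - dist x0 (ys n)))"
          unfolding f_def isom_action_horofun[OF iso] by (simp add: horofun_def)
        have "isom_action x0 T g x - isom_action x0 T (f n) x = (g ?a - f n ?a) - (g ?b - f n ?b)"
          unfolding isom_action_def by simp
        moreover have "\<bar>g ?a - f n ?a\<bar> < e" "\<bar>g ?b - f n ?b\<bar> < e" "\<bar>g x - f n x\<bar> < e"
          using sF n by (auto simp: dist_real_def abs_minus_commute)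
        ultimately show ?thesis using act hn by linarith
      qed
      show ?thesis
      proof (rule ccontr)
        assume ne: "isom_action x0 T g x \<noteq> g x"
        define d where "d = \<bar>isom_action x0 T g x - g x\<bar>"
        have "d > 0" using ne unfolding d_def by simp
        hence "d / 8 > 0" by simp
        from main[OF this] \<open>d > 0\<close> show False unfolding d_def[symmetric] by linarith
      qed
    qed
  qed
  ultimately show ?thesis by blast
qed


lemma part2:
  fixes T :: "'a::complete_space \<Rightarrow> 'a" and x0 :: 'a
  assumes cat: "CAT0 (UNIV :: 'a set)" and iso: "isometry T" and pr: "proper_space (UNIV :: 'a set)"
  shows "fixes_visual_point T"
proof (cases "bounded (range (\<lambda>n. (T^^n) x0))")
  case True
  then obtain c where c: "T c = c" using bounded_orbit_fixed[OF cat iso] by blast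
  thus ?thesis unfolding fixes_visual_point_def by blast
next
  case False
  then obtain ys where ys: "\<And>n. dist x0 (ys n) > real n"
    and yT: "\<And>n. dist (ys n) (T (ys n)) = dist x0 (T x0)"
    using unbounded_orbit_seq[OF iso] by blast
  have Tdist: "dist (T x) (T z) = dist x z" for x z using iso unfolding isometry_def by simp
  have "\<forall>n. \<exists>g. geodesic_segment UNIV x0 (ys n) g" using geodesic_exists[OF cat] by blast
  then obtain gs where gs: "\<And>n. geodesic_segment UNIV x0 (ys n) (gs n)" by metis
  define L where "L n = dist x0 (ys n)" for n
  define f where "f n t = gs n (max 0 (min t (L n)))" for n t
  define K where "K t = cball x0 \<bar>t\<bar>" for t :: real
  have cK: "compact (K t)" for t
    using pr unfolding proper_space_def K_def by auto
  have fK: "f n t \<in> K t" for n t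
  proof -
    have "dist x0 (gs n (max 0 (min t (L n)))) = max 0 (min t (L n))"
      by (rule geo_dist_start[OF gs]) (auto simp: L_def)
    thus ?thesis unfolding f_def K_def by auto
  qed
  obtain \<gamma> where gcl: "\<And>N. \<gamma> \<in> closure (f ` {N..})"
    using cluster_point_exists[of K f, OF cK fK] by auto
  have fn: "f n t = gs n t" if "0 \<le> t" "t \<le> real n" for n t
    using that ys[of n] unfolding f_def L_def by (simp add: max_def min_def)
  have near: "\<exists>n. t \<le> real n \<and> s \<le> real n \<and> dist (f n t) (\<gamma> t) < e \<and> dist (f n s) (\<gamma> s) < e"
    if e0: "e > 0" for t s e
  proof -
    obtain N :: nat where N: "max t s \<le> real N" using real_arch_simple by blast
    obtain q where "q \<in> f ` {N..}" "\<forall>i\<in>{t, s}. dist (q i) (\<gamma> i) < e"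
      using closure_fun_near[OF gcl[of N], of "{t, s}" e] e0 by auto
    then obtain n where "n \<ge> N" "dist (f n t) (\<gamma> t) < e" "dist (f n s) (\<gamma> s) < e" by auto
    thus ?thesis using N by (intro exI[of _ n]) auto
  qed
  have ray: "geodesic_ray \<gamma>"
    unfolding geodesic_ray_def
  proof (intro allI impI)
    fix s t :: real assume s: "0 \<le> s" and t: "0 \<le> t"
    have eps: "\<bar>dist (\<gamma> s) (\<gamma> t) - \<bar>s - t\<bar>\<bar> \<le> 2 * e" if e: "e > 0" for e
    proof -
      obtain n where n: "t \<le> real n" "s \<le> real n" "dist (f n t) (\<gamma> t) < e" "dist (f n s) (\<gamma> s) < e"
        using near[OF e] by blast
      have "dist (gs n s) (gs n t) = \<bar>s - t\<bar>"
        by (rule geo_dist[OF gs]) (use s t n ys[of n] in auto)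
      moreover have "f n s = gs n s" "f n t = gs n t" using fn s t n by auto
      moreover have "dist (gs n s) (gs n t) \<le> dist (gs n s) (\<gamma> s) + dist (\<gamma> s) (\<gamma> t) + dist (\<gamma> t) (gs n t)"
        by (meson dist_triangle order_trans add_right_mono)
      moreover have "dist (\<gamma> s) (\<gamma> t) \<le> dist (\<gamma> s) (gs n s) + dist (gs n s) (gs n t) + dist (gs n t) (\<gamma> t)"
        by (meson dist_triangle order_trans add_right_mono)
      ultimately have A: "\<bar>s - t\<bar> \<le> dist (\<gamma> s) (\<gamma> t) + 2 * e"
        and B: "dist (\<gamma> s) (\<gamma> t) \<le> \<bar>s - t\<bar> + 2 * e"
        using n by (simp_all only: dist_commute)
      show ?thesis using A B by linarith
    qed
    show "dist (\<gamma> s) (\<gamma> t) = \<bar>s - t\<bar>"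
    proof (rule ccontr)
      assume "dist (\<gamma> s) (\<gamma> t) \<noteq> \<bar>s - t\<bar>"
      hence "\<bar>dist (\<gamma> s) (\<gamma> t) - \<bar>s - t\<bar>\<bar> / 4 > 0" by simp
      from eps[OF this] show False using \<open>dist (\<gamma> s) (\<gamma> t) \<noteq> \<bar>s - t\<bar>\<close> by simp
    qed
  qed
  have asy: "dist (T (\<gamma> t)) (\<gamma> t) \<le> dist x0 (T x0)" if t: "t \<ge> 0" for t
  proof (rule field_le_epsilon)
    fix e :: real assume e: "e > 0"
    obtain n where n: "t \<le> real n" "dist (f n t) (\<gamma> t) < e / 2"
      using near[of "e/2" t t] e by auto
    have tL: "t \<le> dist x0 (ys n)" using n ys[of n] by simp
    have "dist (gs n t) ((T \<circ> gs n) t) \<le> (1 - t / dist x0 (ys n)) * dist x0 (T x0)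
          + (t / dist x0 (ys n)) * dist (ys n) (T (ys n))"
      by (rule geod_convex[OF cat gs geo_isometry[OF gs iso]]) (use t tL Tdist in auto)
    also have "\<dots> = dist x0 (T x0)" using yT[of n] by (simp add: algebra_simps)
    finally have c1: "dist (gs n t) (T (gs n t)) \<le> dist x0 (T x0)" by simp
    have fe: "f n t = gs n t" using fn t n by auto
    have "dist (T (\<gamma> t)) (\<gamma> t) \<le> dist (T (\<gamma> t)) (T (gs n t)) + dist (T (gs n t)) (gs n t) + dist (gs n t) (\<gamma> t)"
      by (meson dist_triangle order_trans add_right_mono)
    also have "\<dots> \<le> e / 2 + dist x0 (T x0) + e / 2"
      using Tdist[of "\<gamma> t" "gs n t"] c1 n fe by (simp add: dist_commute)
    finally show "dist (T (\<gamma> t)) (\<gamma> t) \<le> dist x0 (T x0) + e" by simp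
  qed
  have "asymptotic (T \<circ> \<gamma>) \<gamma>" unfolding asymptotic_def using asy by auto
  thus ?thesis using ray unfolding fixes_visual_point_def by blast
qed


theorem corollary5:
  fixes T :: "'a::complete_space \<Rightarrow> 'a" and x0 :: 'a
  assumes "CAT0 (UNIV :: 'a set)" and "isometry T"
  shows "(\<exists>h\<in>metric_compactification x0. isom_action x0 T h = h)
         \<and> (proper_space (UNIV :: 'a set) \<longrightarrow> fixes_visual_point T)"
  using part1[OF assms] part2[OF assms] by blast

thm_deps corollary5

end
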